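(* Let $Q_k$ be a $K$-subset system and $\mathbb N=(N,\sigma)$ the natural numbers with the Scott topology of the usual order. Then: (1) $\mathbb N$ is $1^d$-special and $1^{wf}$-special; (2) $\overline D(\mathbb N)=\overline{KF}(\mathbb N)$, and $D(\mathbb N)=K(\mathbb N)=KF(\mathbb N)$; (3) $\mathbb N$ is $1^k$-special.
   Context: $Q(X)$: nonempty compact saturated subsets; filtered family: nonempty, any two members contain a third. A $K$-subset system $Q_k$ assigns to each $T_0$ space $X$ a set $Q_k(X)$ with $\{\uparrow x\mid x\in X\}\subseteq Q_k(X)\subseteq Q(X)$ such that continuous images of $k$-Rudin sets are $k$-Rudin, where a nonempty $A\subseteq X$ is $k$-Rudin if for some filtered $\mathcal K\subseteq Q_k(X)$, $\overline A$ is a minimal closed set meeting every member of $\mathcal K$. $\overline{KF}(X)$ denotes the $k$-Rudin sets for the choice $Q_k(X)=Q(X)$ (Rudin sets), and $\overline D(X)=\{A\subseteq X\mid \overline A=\overline D$ for some directed $D\subseteq X\}$. $K(X)$: classes of $k$-Rudin sets under $A\sim B\iff\overline A=\overline B$, open sets $U^*=\{[A]\mid A\cap U\ne\emptyset\}$. $D(X)$ and $KF(X)$ are $K(X)$ for $Q_k(X)=\{\uparrow x\mid x\in X\}$ and $Q_k(X)=Q(X)$ respectively (the equalities in (2) identify a class with the common closure of its members). Iterates: $K_0(X)=X$, $K_{\beta+1}(X)=K(K_\beta(X))$, unions at limits; $\mathrm{rank}_k(X)$ least $\alpha$ with $K_\alpha(X)\cong K_{\alpha+1}(X)$; $X$ is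 $\alpha^k$-special if $\mathrm{rank}_k(X)=\alpha$ and $\alpha$ is least with $K_\alpha(X)$ having a greatest element. The notions $D_\beta,\mathrm{rank}_d,\alpha^d$-special and $KF_\beta,\mathrm{rank}_{wf},\alpha^{wf}$-special are the same with $D$, resp. $KF$, in place of $K$. *)

theory Defs
  imports "HOL-Analysis.Analysis"
begin

definition directed_set :: "'a::order set \<Rightarrow> bool" where
  "directed_set D \<longleftrightarrow> D \<noteq> {} \<and> (\<forall>x\<in>D. \<forall>y\<in>D. \<exists>z\<in>D. x \<le> z \<and> y \<le> z)"

definition is_lub :: "'a::order set \<Rightarrow> 'a \<Rightarrow> bool" where
  "is_lub D s \<longleftrightarrow> (\<forall>x\<in>D. x \<le> s) \<and> (\<forall>u. (\<forall>x\<in>D. x \<le> u) \<longrightarrow> s \<le> u)"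

definition scott_open :: "'a::order set \<Rightarrow> bool" where
  "scott_open U \<longleftrightarrow>
     (\<forall>x y. x \<in> U \<and> x \<le> y \<longrightarrow> y \<in> U) \<and>
     (\<forall>D s. directed_set D \<and> is_lub D s \<and> s \<in> U \<longrightarrow> D \<inter> U \<noteq> {})"

definition scott_topology :: "'a::order topology" where
  "scott_topology = topology scott_open"

definition natScott :: "nat topology" where
  "natScott = scott_topology"

definition spec_le :: "'a topology \<Rightarrow> 'a \<Rightarrow> 'a \<Rightarrow> bool" where
  "spec_le X x y \<longleftrightarrow> x \<in> X closure_of {y}"

definition upset :: "'a topology \<Rightarrow> 'a \<Rightarrow> 'a set" where
  "upset X x = {y \<in> topspace X. spec_le X x y}"

definition saturated_in :: "'a topology \<Rightarrow> 'a set \<Rightarrow> bool" where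
  "saturated_in X A \<longleftrightarrow> A \<subseteq> topspace X \<and>
     A = {x \<in> topspace X. \<forall>U. openin X U \<and> A \<subseteq> U \<longrightarrow> x \<in> U}"

definition Qset :: "'a topology \<Rightarrow> 'a set set" where
  "Qset X = {K. K \<noteq> {} \<and> compactin X K \<and> saturated_in X K}"

definition Qpt :: "'a topology \<Rightarrow> 'a set set" where
  "Qpt X = {upset X x | x. x \<in> topspace X}"

definition filtered_family :: "'a set set \<Rightarrow> bool" where
  "filtered_family F \<longleftrightarrow> F \<noteq> {} \<and> (\<forall>K1\<in>F. \<forall>K2\<in>F. \<exists>K3\<in>F. K3 \<subseteq> K1 \<and> K3 \<subseteq> K2)"

definition minimal_meeting :: "'a topology \<Rightarrow> 'a set set \<Rightarrow> 'a set \<Rightarrow> bool" where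
  "minimal_meeting X F C \<longleftrightarrow> closedin X C \<and> (\<forall>K\<in>F. C \<inter> K \<noteq> {}) \<and>
     (\<forall>C'. closedin X C' \<and> C' \<subseteq> C \<and> (\<forall>K\<in>F. C' \<inter> K \<noteq> {}) \<longrightarrow> C' = C)"

definition krudin :: "('a topology \<Rightarrow> 'a set set) \<Rightarrow> 'a topology \<Rightarrow> 'a set \<Rightarrow> bool" where
  "krudin Q X A \<longleftrightarrow> A \<noteq> {} \<and> A \<subseteq> topspace X \<and>
     (\<exists>F. filtered_family F \<and> F \<subseteq> Q X \<and> minimal_meeting X F (X closure_of A))"

text \<open>Points of K(X): classes of k-Rudin sets, each class represented by the common
  closure of its members.\<close>
definition kpoints :: "('a topology \<Rightarrow> 'a set set) \<Rightarrow> 'a topology \<Rightarrow> 'a set set" where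
  "kpoints Q X = (\<lambda>A. X closure_of A) ` {A. krudin Q X A}"

definition ostar :: "('a topology \<Rightarrow> 'a set set) \<Rightarrow> 'a topology \<Rightarrow> 'a set \<Rightarrow> 'a set set" where
  "ostar Q X U = {C \<in> kpoints Q X. C \<inter> U \<noteq> {}}"

definition Kspace :: "('a topology \<Rightarrow> 'a set set) \<Rightarrow> 'a topology \<Rightarrow> 'a set topology" where
  "Kspace Q X = topology_generated_by (ostar Q X ` {U. openin X U})"

definition Dspace :: "'a topology \<Rightarrow> 'a set topology" where
  "Dspace X = Kspace Qpt X"

definition KFspace :: "'a topology \<Rightarrow> 'a set topology" where
  "KFspace X = Kspace Qset X"

definition directed_in :: "'a topology \<Rightarrow> 'a set \<Rightarrow> bool" where
  "directed_in X D \<longleftrightarrow> D \<noteq> {} \<and> D \<subseteq> topspace X \<and>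
     (\<forall>x\<in>D. \<forall>y\<in>D. \<exists>z\<in>D. spec_le X x z \<and> spec_le X y z)"

definition Dbar :: "'a topology \<Rightarrow> 'a set set" where
  "Dbar X = {A. A \<subseteq> topspace X \<and> (\<exists>D. directed_in X D \<and> X closure_of A = X closure_of D)}"

definition KFbar :: "'a topology \<Rightarrow> 'a set set" where
  "KFbar X = {A. krudin Qset X A}"

definition has_greatest :: "'a topology \<Rightarrow> bool" where
  "has_greatest X \<longleftrightarrow> (\<exists>g\<in>topspace X. \<forall>x\<in>topspace X. spec_le X x g)"

section \<open>K-subset systems (restricted to the two carrier types used)\<close>

definition ksys_sandwich :: "('a topology \<Rightarrow> 'a set set) \<Rightarrow> bool" where
  "ksys_sandwich Q \<longleftrightarrow> (\<forall>X. t0_space X \<longrightarrow> Qpt X \<subseteq> Q X \<and> Q X \<subseteq> Qset X)"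

definition kpres :: "('a topology \<Rightarrow> 'a set set) \<Rightarrow> ('b topology \<Rightarrow> 'b set set) \<Rightarrow> bool" where
  "kpres Q Q' \<longleftrightarrow> (\<forall>X Y f A. t0_space X \<and> t0_space Y \<and> continuous_map X Y f \<and> krudin Q X A
       \<longrightarrow> krudin Q' Y (f ` A))"

definition K_subset_system2 :: "('a topology \<Rightarrow> 'a set set) \<Rightarrow> ('b topology \<Rightarrow> 'b set set) \<Rightarrow> bool" where
  "K_subset_system2 Q1 Q2 \<longleftrightarrow> ksys_sandwich Q1 \<and> ksys_sandwich Q2 \<and>
     kpres Q1 Q1 \<and> kpres Q1 Q2 \<and> kpres Q2 Q1 \<and> kpres Q2 Q2"

text \<open>rank = 1: not (K_0 ~ K_1) and K_1 ~ K_2; 1-special additionally: K_0 has no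
  greatest element, K_1 has one.\<close>
definition one_d_special :: "'a topology \<Rightarrow> bool" where
  "one_d_special X \<longleftrightarrow> \<not> (X homeomorphic_space Dspace X) \<and>
     Dspace X homeomorphic_space Dspace (Dspace X) \<and>
     \<not> has_greatest X \<and> has_greatest (Dspace X)"

definition one_wf_special :: "'a topology \<Rightarrow> bool" where
  "one_wf_special X \<longleftrightarrow> \<not> (X homeomorphic_space KFspace X) \<and>
     KFspace X homeomorphic_space KFspace (KFspace X) \<and>
     \<not> has_greatest X \<and> has_greatest (KFspace X)"

definition one_k_special ::
  "('a topology \<Rightarrow> 'a set set) \<Rightarrow> ('a set topology \<Rightarrow> 'a set set set) \<Rightarrow> 'a topology \<Rightarrow> bool" where
  "one_k_special Q1 Q2 X \<longleftrightarrow> \<not> (X homeomorphic_space Kspace Q1 X) \<and>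
     Kspace Q1 X homeomorphic_space Kspace Q2 (Kspace Q1 X) \<and>
     \<not> has_greatest X \<and> has_greatest (Kspace Q1 X)"

end

theory Submission
  imports Defs
begin

lemma spec_trans:
  assumes "spec_le X x z" "spec_le X z w" shows "spec_le X x w"
proof -
  have "z \<in> X closure_of {w}" using assms(2) by (simp add: spec_le_def)
  then have "X closure_of {z} \<subseteq> X closure_of {w}"
    by (simp add: closure_of_minimal)
  moreover have "x \<in> X closure_of {z}" using assms(1) by (simp add: spec_le_def)
  ultimately show ?thesis by (auto simp: spec_le_def)
qed

lemma spec_refl: "x \<in> topspace X \<Longrightarrow> spec_le X x x"
  using closure_of_subset[of "{x}" X] by (simp add: spec_le_def)

lemma directed_krudin:
  assumes ne: "A \<noteq> {}" and sub: "A \<subseteq> topspace X"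
    and dir: "\<forall>x\<in>A. \<forall>y\<in>A. \<exists>z\<in>A. spec_le X x z \<and> spec_le X y z"
    and Q: "Qpt X \<subseteq> Q X"
  shows "krudin Q X A"
proof -
  define F where "F = upset X ` A"
  have FQ: "F \<subseteq> Q X" using Q sub by (auto simp: F_def Qpt_def)
  have filt: "filtered_family F"
    unfolding filtered_family_def
  proof (intro conjI ballI)
    show "F \<noteq> {}" using ne by (simp add: F_def)
    fix K1 K2 assume "K1 \<in> F" "K2 \<in> F"
    then obtain x y where xy: "x \<in> A" "y \<in> A" "K1 = upset X x" "K2 = upset X y"
      by (auto simp: F_def)
    then obtain z where z: "z \<in> A" "spec_le X x z" "spec_le X y z" using dir by blast
    have "upset X z \<subseteq> K1 \<and> upset X z \<subseteq> K2"
      using z xy spec_trans[of X x z] spec_trans[of X y z] by (auto simp: upset_def)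
    then show "\<exists>K3\<in>F. K3 \<subseteq> K1 \<and> K3 \<subseteq> K2" using z by (auto simp: F_def)
  qed
  have mm: "minimal_meeting X F (X closure_of A)"
    unfolding minimal_meeting_def
  proof (intro conjI allI impI ballI)
    show "closedin X (X closure_of A)" by simp
    fix K assume "K \<in> F"
    then obtain x where x: "x \<in> A" "K = upset X x" by (auto simp: F_def)
    have "x \<in> X closure_of A" using x sub closure_of_subset by blast
    moreover have "x \<in> upset X x" using x sub spec_refl[of x X] by (auto simp: upset_def)
    ultimately show "X closure_of A \<inter> K \<noteq> {}" using x by blast
  next
    fix C' assume C': "closedin X C' \<and> C' \<subseteq> X closure_of A \<and> (\<forall>K\<in>F. C' \<inter> K \<noteq> {})"
    have "A \<subseteq> C'"
    proof
      fix x assume "x \<in> A"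
      then obtain w where w: "w \<in> C'" "spec_le X x w"
        using C' by (auto simp: F_def upset_def)
      have "X closure_of {w} \<subseteq> C'" using w C' by (simp add: closure_of_minimal)
      then show "x \<in> C'" using w by (auto simp: spec_le_def)
    qed
    then have "X closure_of A \<subseteq> C'" using C' by (simp add: closure_of_minimal)
    then show "C' = X closure_of A" using C' by blast
  qed
  show ?thesis unfolding krudin_def using ne sub filt FQ mm by blast
qed

lemma krudin_closure:
  assumes "krudin Q X A" shows "closedin X (X closure_of A) \<and> X closure_of A \<noteq> {}"
  using assms closure_of_subset[of A X] by (auto simp: krudin_def)

lemma topK: "topspace (Kspace Q X) = kpoints Q X"
proof -
  have "topspace (Kspace Q X) = \<Union>(ostar Q X ` {U. openin X U})"
    by (simp add: Kspace_def)
  also have "\<dots> = kpoints Q X"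
  proof
    show "\<Union>(ostar Q X ` {U. openin X U}) \<subseteq> kpoints Q X" unfolding ostar_def by blast
    show "kpoints Q X \<subseteq> \<Union>(ostar Q X ` {U. openin X U})"
    proof
      fix C assume C: "C \<in> kpoints Q X"
      then obtain A where A: "krudin Q X A" "C = X closure_of A" by (auto simp: kpoints_def)
      have "C \<noteq> {}" "C \<subseteq> topspace X" using krudin_closure[OF A(1)] A(2) closure_of_subset_topspace[of X A]
        by auto
      then have "C \<inter> topspace X \<noteq> {}" by blast
      then have "C \<in> ostar Q X (topspace X)" using C by (simp add: ostar_def)
      then show "C \<in> \<Union>(ostar Q X ` {U. openin X U})" by blast
    qed
  qed
  finally show ?thesis .
qed

lemma ostar_open: "openin X U \<Longrightarrow> openin (Kspace Q X) (ostar Q X U)"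
  unfolding Kspace_def by (rule topology_generated_by_Basis) blast


lemma Kspace_cong: "Q X = Q' X \<Longrightarrow> Kspace Q X = Kspace Q' X"
  unfolding Kspace_def ostar_def kpoints_def krudin_def by simp

lemma homeo_greatest:
  assumes "X homeomorphic_space Y" "has_greatest Y" shows "has_greatest X"
proof -
  obtain f where f: "homeomorphic_map Y X f"
    using assms(1) homeomorphic_space homeomorphic_space_sym by blast
  obtain g where g: "g \<in> topspace Y" "\<forall>y\<in>topspace Y. spec_le Y y g"
    using assms(2) by (auto simp: has_greatest_def)
  have surj: "f ` topspace Y = topspace X" using f by (simp add: homeomorphic_eq_everything_map)
  have cl: "X closure_of {f g} = f ` (Y closure_of {g})"
    using homeomorphic_map_closure_of[OF f, of "{g}"] g by simp
  show ?thesis unfolding has_greatest_def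
  proof (intro bexI ballI)
    show "f g \<in> topspace X" using g surj by blast
    fix x assume "x \<in> topspace X"
    then obtain y where y: "y \<in> topspace Y" "x = f y" using surj by blast
    then have "y \<in> Y closure_of {g}" using g by (simp add: spec_le_def)
    then show "spec_le X x (f g)" using y cl by (simp add: spec_le_def)
  qed
qed

lemma sober_K:
  assumes t0: "t0_space X" and Q: "Qpt X \<subseteq> Q X"
    and pc: "\<And>C. closedin X C \<Longrightarrow> C \<noteq> {} \<Longrightarrow> \<exists>x\<in>topspace X. C = X closure_of {x}"
  shows "X homeomorphic_space Kspace Q X"
proof -
  define f where "f = (\<lambda>x. X closure_of {x})"
  have kp: "kpoints Q X = f ` topspace X"
  proof
    show "kpoints Q X \<subseteq> f ` topspace X"
    proof
      fix C assume "C \<in> kpoints Q X"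
      then obtain A where A: "krudin Q X A" "C = X closure_of A" by (auto simp: kpoints_def)
      then obtain x where "x \<in> topspace X" "C = X closure_of {x}"
        using pc krudin_closure[OF A(1)] by metis
      then show "C \<in> f ` topspace X" by (auto simp: f_def)
    qed
    show "f ` topspace X \<subseteq> kpoints Q X"
    proof
      fix C assume "C \<in> f ` topspace X"
      then obtain x where x: "x \<in> topspace X" "C = f x" by blast
      have "krudin Q X {x}"
        by (rule directed_krudin) (use x Q spec_refl[of x X] in auto)
      then show "C \<in> kpoints Q X" using x by (auto simp: kpoints_def f_def)
    qed
  qed
  have meets: "f x \<inter> U \<noteq> {} \<longleftrightarrow> x \<in> U" if "openin X U" "x \<in> topspace X" for x U
  proof
    assume "f x \<inter> U \<noteq> {}"
    then obtain y where "y \<in> X closure_of {x}" "y \<in> U" by (auto simp: f_def)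
    then show "x \<in> U" using that by (auto simp: in_closure_of)
  next
    assume "x \<in> U"
    then show "f x \<inter> U \<noteq> {}" using that closure_of_subset[of "{x}" X] by (auto simp: f_def)
  qed
  have inj: "x = y" if xy: "x \<in> topspace X" "y \<in> topspace X" "f x = f y" for x y
  proof (rule ccontr)
    assume "x \<noteq> y"
    then obtain U where U: "openin X U" "x \<notin> U \<longleftrightarrow> y \<in> U"
      using t0 xy unfolding t0_space_def by blast
    show False using meets[OF U(1) xy(1)] meets[OF U(1) xy(2)] U(2) xy(3) by auto
  qed
  define g where "g = (\<lambda>C. SOME x. x \<in> topspace X \<and> C = f x)"
  have tK: "topspace (Kspace Q X) = f ` topspace X" using topK kp by metis
  have g1: "g C \<in> topspace X \<and> C = f (g C)" if "C \<in> f ` topspace X" for C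
    unfolding g_def by (rule someI_ex) (use that in blast)
  have gf: "g (f x) = x" if "x \<in> topspace X" for x
    using g1[of "f x"] that inj by blast
  have ostar_eq: "ostar Q X U = f ` U" if "openin X U" for U
  proof -
    have Ut: "U \<subseteq> topspace X" using that openin_subset by blast
    have "ostar Q X U = {C \<in> f ` topspace X. C \<inter> U \<noteq> {}}" by (simp add: ostar_def kp)
    also have "\<dots> = f ` U" using meets[OF that] Ut by blast
    finally show ?thesis .
  qed
  have contf: "continuous_map X (Kspace Q X) f"
    unfolding continuous_map_def
  proof (intro conjI allI impI)
    show "f \<in> topspace X \<rightarrow> topspace (Kspace Q X)" using tK by blast
    fix W assume "openin (Kspace Q X) W"
    then have "generate_topology_on (ostar Q X ` {U. openin X U}) W"
      unfolding Kspace_def by (rule openin_topology_generated_by)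
    then show "openin X {x \<in> topspace X. f x \<in> W}"
    proof (induction rule: generate_topology_on.induct)
      case Empty then show ?case by simp
    next
      case (Int a b)
      have "{x \<in> topspace X. f x \<in> a \<inter> b} = {x \<in> topspace X. f x \<in> a} \<inter> {x \<in> topspace X. f x \<in> b}"
        by blast
      then show ?case using Int by (simp add: openin_Int)
    next
      case (UN K)
      have "{x \<in> topspace X. f x \<in> \<Union>K} = \<Union>((\<lambda>k. {x \<in> topspace X. f x \<in> k}) ` K)" by blast
      moreover have "openin X (\<Union>((\<lambda>k. {x \<in> topspace X. f x \<in> k}) ` K))"
        using UN.IH by (intro openin_Union) blast
      ultimately show ?case by simp
    next
      case (Basis s)
      then obtain U where U: "openin X U" "s = ostar Q X U" by blast
      have Ut: "U \<subseteq> topspace X" using U openin_subset by blast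
      have "{x \<in> topspace X. f x \<in> s} = U"
      proof
        show "{x \<in> topspace X. f x \<in> s} \<subseteq> U" using U(2) ostar_eq[OF U(1)] Ut inj by blast
        show "U \<subseteq> {x \<in> topspace X. f x \<in> s}" using U(2) ostar_eq[OF U(1)] Ut by blast
      qed
      then show ?case using U by simp
    qed
  qed
  have contg: "continuous_map (Kspace Q X) X g"
    unfolding continuous_map_def
  proof (intro conjI allI impI)
    show "g \<in> topspace (Kspace Q X) \<rightarrow> topspace X" using tK g1 by blast
    fix U assume U: "openin X U"
    have Ut: "U \<subseteq> topspace X" using U openin_subset by blast
    have "{C \<in> topspace (Kspace Q X). g C \<in> U} = f ` U"
      using tK gf Ut by force
    then show "openin (Kspace Q X) {C \<in> topspace (Kspace Q X). g C \<in> U}"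
      using ostar_open[OF U, of Q] ostar_eq[OF U] by simp
  qed
  have "homeomorphic_maps X (Kspace Q X) f g"
    unfolding homeomorphic_maps_def using contf contg gf g1 tK by auto
  then show ?thesis by (rule homeomorphic_maps_imp_homeomorphic_space)
qed


definition upper :: "nat set \<Rightarrow> bool" where
  "upper U \<longleftrightarrow> (\<forall>x y. x \<in> U \<and> x \<le> y \<longrightarrow> y \<in> U)"

definition down :: "nat set \<Rightarrow> bool" where
  "down C \<longleftrightarrow> (\<forall>x y. y \<in> C \<and> x \<le> y \<longrightarrow> x \<in> C)"

lemma scott_open_nat: "scott_open (U::nat set) \<longleftrightarrow> upper U"
proof (rule iffI)
  assume "scott_open U" then show "upper U" unfolding scott_open_def upper_def by blast
next
  assume up: "upper U"
  show "scott_open U" unfolding scott_open_def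
  proof (rule conjI)
    show "\<forall>x y. x \<in> U \<and> x \<le> y \<longrightarrow> y \<in> U" using up by (simp add: upper_def)
    show "\<forall>D s. directed_set D \<and> is_lub D s \<and> s \<in> U \<longrightarrow> D \<inter> U \<noteq> {}"
    proof (intro allI impI)
    fix D s assume H: "directed_set D \<and> is_lub D s \<and> (s::nat) \<in> U"
    have "D \<subseteq> {..s}" using H unfolding is_lub_def by blast
    then have fin: "finite D" using finite_subset by blast
    have ne: "D \<noteq> {}" using H unfolding directed_set_def by blast
    have mD: "Max D \<in> D" using fin ne by simp
    have "\<forall>x\<in>D. x \<le> Max D" using fin by simp
    then have "s \<le> Max D" using H unfolding is_lub_def by blast
    then have "Max D \<in> U" using up H unfolding upper_def by blast
    then show "D \<inter> U \<noteq> {}" using mD by blast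
  qed
  qed
qed

lemma istop_upper: "istopology (scott_open :: nat set \<Rightarrow> bool)"
  unfolding istopology_def scott_open_nat upper_def by blast

lemma open_nat: "openin natScott U \<longleftrightarrow> upper U"
  by (simp add: natScott_def scott_topology_def istop_upper scott_open_nat)

lemma top_nat: "topspace natScott = UNIV"
proof -
  have "openin natScott UNIV" by (simp add: open_nat upper_def)
  then show ?thesis using openin_subset by blast
qed

lemma closed_nat: "closedin natScott C \<longleftrightarrow> down C"
  unfolding closedin_def top_nat open_nat upper_def down_def by blast

lemma closure_nat: "natScott closure_of A = {x. \<exists>a\<in>A. x \<le> a}"
proof (intro set_eqI iffI)
  fix x assume x: "x \<in> natScott closure_of A"
  have o: "openin natScott {x..}" by (simp add: open_nat upper_def)
  have "x \<in> {x..}" by simp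
  then obtain y where "y \<in> A" "y \<in> {x..}" using x o unfolding in_closure_of by blast
  then show "x \<in> {x. \<exists>a\<in>A. x \<le> a}" by auto
next
  fix x assume "x \<in> {x. \<exists>a\<in>A. x \<le> a}"
  then obtain a where a: "a \<in> A" "x \<le> a" by blast
  show "x \<in> natScott closure_of A"
    unfolding in_closure_of top_nat open_nat upper_def
  proof (intro conjI allI impI)
    show "x \<in> UNIV" by simp
    fix T assume "x \<in> T \<and> (\<forall>x y. x \<in> T \<and> x \<le> y \<longrightarrow> y \<in> T)"
    then have "a \<in> T" using a by blast
    then show "\<exists>y. y \<in> A \<and> y \<in> T" using a by blast
  qed
qed

lemma spec_nat: "spec_le natScott x y \<longleftrightarrow> x \<le> y"
  by (simp add: spec_le_def closure_nat)

lemma upset_nat: "upset natScott x = {x..}"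
  by (auto simp: upset_def spec_nat top_nat)

lemma t0_nat: "t0_space natScott"
  unfolding t0_space_def
proof (intro ballI impI)
  fix x y :: nat assume "x \<noteq> y"
  have "openin natScott {max x y..}" by (simp add: open_nat upper_def)
  moreover have "(x \<notin> {max x y..}) = (y \<in> {max x y..})" using \<open>x \<noteq> y\<close> by (simp add: max_def)
  ultimately show "\<exists>U. openin natScott U \<and> (x \<notin> U) = (y \<in> U)" by blast
qed

lemma Qpt_nat: "Qpt natScott = range (\<lambda>x. {x..})"
  by (auto simp: Qpt_def upset_nat top_nat)

lemma Qset_nat: "Qset natScott \<subseteq> Qpt natScott"
proof
  fix K assume "K \<in> Qset natScott"
  then have ne: "K \<noteq> {}" and sat: "saturated_in natScott K" by (auto simp: Qset_def)
  define m where "m = (LEAST x. x \<in> K)"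
  have mK: "m \<in> K" using ne unfolding m_def by (metis LeastI ex_in_conv)
  have "K = {m..}"
  proof
    show "K \<subseteq> {m..}" unfolding m_def by (auto intro: Least_le)
    show "{m..} \<subseteq> K"
    proof
      fix x assume x: "x \<in> {m..}"
      have "\<forall>U. openin natScott U \<and> K \<subseteq> U \<longrightarrow> x \<in> U"
        using x mK by (auto simp: open_nat upper_def)
      then show "x \<in> K" using sat unfolding saturated_in_def top_nat by blast
    qed
  qed
  then show "K \<in> Qpt natScott" by (simp add: Qpt_nat)
qed

lemma dir_nat: "\<forall>x\<in>A. \<forall>y\<in>A. \<exists>z\<in>A. spec_le natScott x z \<and> spec_le natScott y z"
proof (intro ballI)
  fix x y assume "x \<in> A" "y \<in> A"
  moreover have "max x y = x \<or> max x y = y" by (simp add: max_def)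
  moreover have "x \<le> max x y" "y \<le> max x y" by simp_all
  ultimately show "\<exists>z\<in>A. spec_le natScott x z \<and> spec_le natScott y z"
    unfolding spec_nat by metis
qed

lemma krudin_nat: "(A::nat set) \<noteq> {} \<Longrightarrow> Qpt natScott \<subseteq> Q natScott \<Longrightarrow> krudin Q natScott A"
  by (rule directed_krudin) (auto simp: top_nat dir_nat)

lemma no_greatest_nat: "\<not> has_greatest natScott"
  unfolding has_greatest_def spec_nat top_nat by (metis Suc_n_not_le_n UNIV_I)


abbreviation "K1 \<equiv> Kspace Qpt natScott"
abbreviation "P1 \<equiv> kpoints Qpt natScott"

lemma kp1: "P1 = {C. C \<noteq> {} \<and> down C}"
proof
  show "P1 \<subseteq> {C. C \<noteq> {} \<and> down C}"
  proof
    fix C assume "C \<in> P1"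
    then obtain A where A: "krudin Qpt natScott A" "C = natScott closure_of A" by (auto simp: kpoints_def)
    have "closedin natScott C" "C \<noteq> {}" using krudin_closure[OF A(1)] A(2) by auto
    then show "C \<in> {C. C \<noteq> {} \<and> down C}" using closed_nat by blast
  qed
  show "{C. C \<noteq> {} \<and> down C} \<subseteq> P1"
  proof
    fix C assume C: "C \<in> {C. C \<noteq> {} \<and> down C}"
    then have "krudin Qpt natScott C" using krudin_nat[of C Qpt] by simp
    moreover have "natScott closure_of C = C" using C closed_nat closure_of_closedin by blast
    ultimately show "C \<in> P1" unfolding kpoints_def by (metis image_eqI mem_Collect_eq)
  qed
qed

lemma top1: "topspace K1 = P1" by (rule topK)

lemma meet_down: "down C \<Longrightarrow> (C \<inter> {x..} \<noteq> {} \<longleftrightarrow> x \<in> C)"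
  unfolding down_def by auto

lemma upper_nested: "upper U \<Longrightarrow> upper V \<Longrightarrow> U \<subseteq> V \<or> V \<subseteq> U"
  unfolding upper_def by (meson nle_le subsetI)

lemma opens1:
  assumes "openin K1 W" shows "\<exists>U. upper U \<and> W = ostar Qpt natScott U"
proof -
  have "generate_topology_on (ostar Qpt natScott ` {U. openin natScott U}) W"
    using assms unfolding Kspace_def by (rule openin_topology_generated_by)
  then show ?thesis
  proof (induction rule: generate_topology_on.induct)
    case Empty
    have "ostar Qpt natScott {} = {}" by (simp add: ostar_def)
    then show ?case by (metis empty_iff upper_def)
  next
    case (Int a b)
    then obtain U V where UV: "upper U" "a = ostar Qpt natScott U" "upper V" "b = ostar Qpt natScott V"
      by blast
    show ?case
    proof (cases "U \<subseteq> V")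
      case True
      then have "a \<inter> b = a" using UV unfolding ostar_def by blast
      then show ?thesis using UV by metis
    next
      case False
      then have "V \<subseteq> U" using upper_nested UV by blast
      then have "a \<inter> b = b" using UV unfolding ostar_def by blast
      then show ?thesis using UV by metis
    qed
  next
    case (UN K)
    then obtain u where u: "\<forall>k\<in>K. upper (u k) \<and> k = ostar Qpt natScott (u k)" by metis
    have up: "upper (\<Union>(u ` K))" using u unfolding upper_def by blast
    have "\<Union>K = ostar Qpt natScott (\<Union>(u ` K))"
    proof
      show "\<Union>K \<subseteq> ostar Qpt natScott (\<Union>(u ` K))"
      proof
        fix C assume "C \<in> \<Union>K"
        then obtain k where k: "k \<in> K" "C \<in> k" by blast
        then have "C \<in> ostar Qpt natScott (u k)" using u by metis
        then have "C \<in> P1" "C \<inter> u k \<noteq> {}" unfolding ostar_def by auto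
        moreover have "u k \<subseteq> \<Union>(u ` K)" using k by blast
        ultimately show "C \<in> ostar Qpt natScott (\<Union>(u ` K))" unfolding ostar_def by blast
      qed
      show "ostar Qpt natScott (\<Union>(u ` K)) \<subseteq> \<Union>K"
      proof
        fix C assume "C \<in> ostar Qpt natScott (\<Union>(u ` K))"
        then obtain k where k: "k \<in> K" "C \<in> P1" "C \<inter> u k \<noteq> {}" unfolding ostar_def by blast
        then have "C \<in> ostar Qpt natScott (u k)" unfolding ostar_def by blast
        then have "C \<in> k" using u k(1) by metis
        then show "C \<in> \<Union>K" using k(1) by blast
      qed
    qed
    then show ?case using up by blast
  next
    case (Basis s)
    then show ?case by (auto simp: open_nat)
  qed
qed

lemma ostar_up_open: "openin K1 (ostar Qpt natScott {x..})"
  by (rule ostar_open) (simp add: open_nat upper_def)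

lemma ostar_up: "C \<in> P1 \<Longrightarrow> C \<in> ostar Qpt natScott {x..} \<longleftrightarrow> x \<in> C"
  unfolding ostar_def using meet_down kp1 by auto

lemma t0_K1: "t0_space K1"
  unfolding t0_space_def top1
proof (intro ballI impI)
  fix C D assume CD: "C \<in> P1" "D \<in> P1" "C \<noteq> D"
  have "\<exists>x. \<not> (x \<in> C \<longleftrightarrow> x \<in> D)" using CD(3) by (simp add: set_eq_iff)
  then obtain x where x: "\<not> (x \<in> C \<longleftrightarrow> x \<in> D)" by blast
  have "(C \<notin> ostar Qpt natScott {x..}) = (D \<in> ostar Qpt natScott {x..})"
  proof -
    have a: "C \<in> ostar Qpt natScott {x..} \<longleftrightarrow> x \<in> C" by (rule ostar_up[OF CD(1)])
    have b: "D \<in> ostar Qpt natScott {x..} \<longleftrightarrow> x \<in> D" by (rule ostar_up[OF CD(2)])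
    show ?thesis using a b x by blast
  qed
  with ostar_up_open[of x] show "\<exists>U. openin K1 U \<and> (C \<notin> U) = (D \<in> U)"
    by (intro exI[of _ "ostar Qpt natScott {x..}"]) (rule conjI)
qed

lemma cl1: assumes C: "C \<in> P1" shows "K1 closure_of {C} = {D \<in> P1. D \<subseteq> C}"
proof (intro set_eqI iffI)
  fix D assume D: "D \<in> K1 closure_of {C}"
  have "K1 closure_of {C} \<subseteq> topspace K1" by (rule closure_of_subset_topspace)
  then have "D \<in> topspace K1" using D by (rule subsetD)
  then have DP: "D \<in> P1" unfolding top1 .
  have "D \<subseteq> C"
  proof
    fix x assume "x \<in> D"
    then have Dx: "D \<in> ostar Qpt natScott {x..}" using ostar_up[OF DP] by simp
    have "\<forall>T. D \<in> T \<and> openin K1 T \<longrightarrow> (\<exists>y. y \<in> {C} \<and> y \<in> T)"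
      using D unfolding in_closure_of by simp
    then have "\<exists>y. y \<in> {C} \<and> y \<in> ostar Qpt natScott {x..}" using Dx ostar_up_open[of x] by simp
    then have "C \<in> ostar Qpt natScott {x..}" by simp
    then show "x \<in> C" using ostar_up[OF C] by simp
  qed
  then show "D \<in> {D \<in> P1. D \<subseteq> C}" using DP by simp
next
  fix D assume D: "D \<in> {D \<in> P1. D \<subseteq> C}"
  show "D \<in> K1 closure_of {C}"
    unfolding in_closure_of
  proof (intro conjI allI impI)
    show "D \<in> topspace K1" using D top1 by simp
    fix T assume T: "D \<in> T \<and> openin K1 T"
    then obtain U where U: "upper U" "T = ostar Qpt natScott U" using opens1 by blast
    then have "D \<in> P1" "D \<inter> U \<noteq> {}" using T unfolding ostar_def by auto
    then have "C \<inter> U \<noteq> {}" using D by blast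
    then have "C \<in> T" using U C unfolding ostar_def by simp
    then show "\<exists>y. y \<in> {C} \<and> y \<in> T" by blast
  qed
qed

lemma pc1:
  assumes F: "closedin K1 F" "F \<noteq> {}" shows "\<exists>C\<in>topspace K1. F = K1 closure_of {C}"
proof -
  have FP: "F \<subseteq> P1" using F top1 closedin_subset by blast
  have "openin K1 (P1 - F)" using F top1 by (simp add: closedin_def)
  then obtain U where U: "upper U" "P1 - F = ostar Qpt natScott U" using opens1 by blast
  have Feq: "F = {D \<in> P1. D \<inter> U = {}}"
  proof
    show "F \<subseteq> {D \<in> P1. D \<inter> U = {}}"
    proof
      fix D assume "D \<in> F"
      then have "D \<notin> ostar Qpt natScott U" "D \<in> P1" using U FP by auto
      then show "D \<in> {D \<in> P1. D \<inter> U = {}}" unfolding ostar_def by blast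
    qed
    show "{D \<in> P1. D \<inter> U = {}} \<subseteq> F"
    proof
      fix D assume "D \<in> {D \<in> P1. D \<inter> U = {}}"
      then have "D \<in> P1" "D \<notin> ostar Qpt natScott U" unfolding ostar_def by auto
      then show "D \<in> F" using U by blast
    qed
  qed
  define C where "C = - U"
  obtain D0 where D0: "D0 \<in> F" using F by blast
  then have "D0 \<in> P1" "D0 \<inter> U = {}" using Feq by auto
  then have "C \<noteq> {}" using kp1 unfolding C_def by blast
  moreover have "down C" using U unfolding C_def upper_def down_def by blast
  ultimately have CP: "C \<in> P1" using kp1 by simp
  have "F = {D \<in> P1. D \<subseteq> C}" using Feq unfolding C_def by blast
  then show ?thesis using cl1[OF CP] CP top1 by blast
qed

lemma greatest1: "has_greatest K1"
proof -
  have UP: "UNIV \<in> P1" using kp1 by (simp add: down_def)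
  show ?thesis unfolding has_greatest_def spec_le_def
    using UP cl1[OF UP] top1 by blast
qed


lemma Dbar_nat: "Dbar natScott = {A. A \<noteq> {}}"
proof (intro set_eqI iffI)
  fix A assume "A \<in> Dbar natScott"
  then obtain D where D: "directed_in natScott D" "natScott closure_of A = natScott closure_of D"
    unfolding Dbar_def by blast
  have "D \<subseteq> natScott closure_of D" using D(1) closure_of_subset unfolding directed_in_def by blast
  then have "natScott closure_of A \<noteq> {}" using D unfolding directed_in_def by auto
  then show "A \<in> {A. A \<noteq> {}}" by auto
next
  fix A :: "nat set" assume A: "A \<in> {A. A \<noteq> {}}"
  have "directed_in natScott A" unfolding directed_in_def using A dir_nat[of A] top_nat by simp
  then show "A \<in> Dbar natScott" unfolding Dbar_def top_nat by blast
qed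

lemma KFbar_nat: "Qpt natScott \<subseteq> Qset natScott \<Longrightarrow> KFbar natScott = {A. A \<noteq> {}}"
proof (intro set_eqI iffI)
  fix A assume "A \<in> KFbar natScott" then show "A \<in> {A. A \<noteq> {}}"
    unfolding KFbar_def krudin_def by blast
next
  fix A :: "nat set" assume "Qpt natScott \<subseteq> Qset natScott" "A \<in> {A. A \<noteq> {}}"
  then show "A \<in> KFbar natScott" unfolding KFbar_def using krudin_nat[of A Qset] by blast
qed

theorem mainTheorem10:
  fixes Q1 :: "nat topology \<Rightarrow> nat set set"
    and Q2 :: "nat set topology \<Rightarrow> nat set set set"
  assumes "K_subset_system2 Q1 Q2"
  shows "one_d_special natScott \<and> one_wf_special natScott
       \<and> (Dbar natScott = KFbar natScott
          \<and> Dspace natScott = Kspace Q1 natScott \<and> Kspace Q1 natScott = KFspace natScott)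
       \<and> one_k_special Q1 Q2 natScott"
proof -
  have ks1: "ksys_sandwich Q1" and ks2: "ksys_sandwich Q2"
    using assms unfolding K_subset_system2_def by auto
  have h1: "Qpt natScott \<subseteq> Q1 natScott" "Q1 natScott \<subseteq> Qset natScott"
    using ks1 t0_nat unfolding ksys_sandwich_def by auto
  have QQ1: "Q1 natScott = Qpt natScott" using h1 Qset_nat by blast
  have QQs: "Qset natScott = Qpt natScott" using h1 Qset_nat by blast
  have e1: "Kspace Q1 natScott = K1" by (rule Kspace_cong[of Q1 natScott Qpt, OF QQ1])
  have e2: "KFspace natScott = K1" unfolding KFspace_def by (rule Kspace_cong[of Qset natScott Qpt, OF QQs])
  have e3: "Dspace natScott = K1" by (simp add: Dspace_def)
  have h2: "Qpt K1 \<subseteq> Q2 K1" "Q2 K1 \<subseteq> Qset K1"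
    using ks2 t0_K1 unfolding ksys_sandwich_def by auto
  have hom: "K1 homeomorphic_space Kspace Q K1" if "Qpt K1 \<subseteq> Q K1" for Q
    by (rule sober_K[of K1 Q, OF t0_K1 that pc1])
  have notN: "\<not> natScott homeomorphic_space K1"
    using homeo_greatest greatest1 no_greatest_nat by blast
  have d: "one_d_special natScott"
    unfolding one_d_special_def e3 Dspace_def[of K1]
    using notN hom[of Qpt] greatest1 no_greatest_nat by simp
  have wf: "one_wf_special natScott"
    unfolding one_wf_special_def e2 KFspace_def[of K1]
    using notN hom[of Qset] h2 greatest1 no_greatest_nat by auto
  have k: "one_k_special Q1 Q2 natScott"
    unfolding one_k_special_def e1
    using notN hom[of Q2] h2 greatest1 no_greatest_nat by auto
  have bars: "Dbar natScott = KFbar natScott"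
    using Dbar_nat KFbar_nat QQs by simp
  show ?thesis using d wf k bars e1 e2 e3 by simp
qed

end
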